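(* Wilf equivalence partitions the set $\mathbb{P}^3$ of words of length 3 into the following equivalence classes: (1) $\{aaa\}$ for each $a\in\mathbb{P}$; (2) for $a<b$: $\{aab,aba,baa\}$; (3) for $a>b$: $\{aab,baa\}$ and $\{aba\}$; (4) for $a<b<c$: $\{bac,cab\}$ and $\{abc,acb,cba,bca\}$.
   Context: $\mathbb{P}$ is the set of positive integers with the usual order, $\mathbb{P}^*$ the finite words over $\mathbb{P}$, $\mathbb{P}^3$ the words of length 3. For $w=w_1\ldots w_n$, $\mathrm{wt}(w)=t^nx^{\sum_iw_i}$. For words $u,w$, $u\le w$ if there are $|u|$ consecutive letters of $w$ whose $i$-th letter is $\ge$ the $i$-th letter of $u$ for each $i$. $F(u;t,x)=\sum_{w:\,u\le w}\mathrm{wt}(w)$ and $u\backsim v$ (Wilf equivalence) iff $F(u;t,x)=F(v;t,x)$. *)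

theory Defs
  imports Main
begin

definition pword :: "nat list \<Rightarrow> bool" where
  "pword w \<longleftrightarrow> (\<forall>a\<in>set w. 1 \<le> a)"

definition P3 :: "nat list set" where
  "P3 = {w. pword w \<and> length w = 3}"

definition pat_le :: "nat list \<Rightarrow> nat list \<Rightarrow> bool" where
  "pat_le u w \<longleftrightarrow> (\<exists>i. i + length u \<le> length w \<and> (\<forall>j<length u. u ! j \<le> w ! (i + j)))"

text \<open>The generating function F(u;t,x) = sum over words w with u \<le> w of t^|w| x^(sum w),
  represented by its coefficient array: coefficient of t^n x^m.\<close>
definition Fgen :: "nat list \<Rightarrow> nat \<Rightarrow> nat \<Rightarrow> nat" where
  "Fgen u n m = card {w. pword w \<and> pat_le u w \<and> length w = n \<and> sum_list w = m}"

definition wilf_equiv :: "nat list \<Rightarrow> nat list \<Rightarrow> bool" where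
  "wilf_equiv u v \<longleftrightarrow> Fgen u = Fgen v"

definition listed_classes :: "nat list set set" where
  "listed_classes =
     {{[a,a,a]} | a. 1 \<le> a}
   \<union> {{[a,a,b],[a,b,a],[b,a,a]} | a b. 1 \<le> a \<and> a < b}
   \<union> {{[a,a,b],[b,a,a]} | a b. 1 \<le> b \<and> b < a}
   \<union> {{[a,b,a]} | a b. 1 \<le> b \<and> b < a}
   \<union> {{[b,a,c],[c,a,b]} | a b c. 1 \<le> a \<and> a < b \<and> b < c}
   \<union> {{[a,b,c],[a,c,b],[c,b,a],[b,c,a]} | a b c. 1 \<le> a \<and> a < b \<and> b < c}"

end

theory Submission
  imports Defs "HOL-Library.Multiset"
begin


definition occ3 :: "nat \<Rightarrow> nat \<Rightarrow> nat \<Rightarrow> nat list \<Rightarrow> bool" where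
  "occ3 a b c w \<longleftrightarrow> (\<exists>xs e f g ys. w = xs @ e # f # g # ys \<and> a \<le> e \<and> b \<le> f \<and> c \<le> g)"

lemma pat_le_occ3: "pat_le [a,b,c] w \<longleftrightarrow> occ3 a b c w"
proof
  assume "pat_le [a,b,c] w"
  then obtain i where i0: "i + length [a,b,c] \<le> length w" "\<forall>j<length [a,b,c]. [a,b,c] ! j \<le> w ! (i + j)"
    unfolding pat_le_def by blast
  have i: "i + 3 \<le> length w" using i0(1) by simp
  have h: "a \<le> w!i" "b \<le> w!(i+1)" "c \<le> w!(i+2)" using i0(2)[rule_format, of 0] i0(2)[rule_format, of 1] i0(2)[rule_format, of 2] by auto
  have "drop i w = w!i # w!(i+1) # w!(i+2) # drop (i+3) w"
    using i(1) by (simp add: Cons_nth_drop_Suc[symmetric] numeral_3_eq_3)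
  then have "w = take i w @ w!i # w!(i+1) # w!(i+2) # drop (i+3) w"
    by (metis append_take_drop_id)
  then show "occ3 a b c w" unfolding occ3_def using h by blast
next
  assume "occ3 a b c w"
  then obtain xs e f g ys where w: "w = xs @ e # f # g # ys" "a \<le> e" "b \<le> f" "c \<le> g"
    unfolding occ3_def by blast
  show "pat_le [a,b,c] w" unfolding pat_le_def
  proof (intro exI[of _ "length xs"] conjI allI impI)
    show "length xs + length [a,b,c] \<le> length w" using w by simp
    fix j assume "j < length [a,b,c]"
    then have "j = 0 \<or> j = 1 \<or> j = 2" by auto
    then show "[a,b,c] ! j \<le> w ! (length xs + j)" using w by (auto simp: nth_append)
  qed
qed

lemma occ3_rev: "occ3 a b c w \<longleftrightarrow> occ3 c b a (rev w)"
proof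
  assume "occ3 a b c w"
  then obtain xs e f g ys where w: "w = xs @ e # f # g # ys" "a \<le> e" "b \<le> f" "c \<le> g"
    unfolding occ3_def by blast
  then have "rev w = rev ys @ g # f # e # rev xs" by simp
  then show "occ3 c b a (rev w)" unfolding occ3_def using w by blast
next
  assume "occ3 c b a (rev w)"
  then obtain xs e f g ys where w: "rev w = xs @ e # f # g # ys" "c \<le> e" "b \<le> f" "a \<le> g"
    unfolding occ3_def by blast
  then have "w = rev ys @ g # f # e # rev xs" by (metis rev_rev_ident rev.simps append.assoc rev_append append_Cons append_Nil)
  then show "occ3 a b c w" unfolding occ3_def using w by blast
qed

definition adj :: "nat \<Rightarrow> nat \<Rightarrow> nat list \<Rightarrow> bool" where
  "adj p q R \<longleftrightarrow> (\<exists>xs y z ys. R = xs @ y # z # ys \<and> p \<le> y \<and> q \<le> z)"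

lemma adj_rev: "adj p q (rev R) \<longleftrightarrow> adj q p R"
proof
  assume "adj p q (rev R)"
  then obtain xs y z ys where w: "rev R = xs @ y # z # ys" "p \<le> y" "q \<le> z" unfolding adj_def by blast
  then have "R = rev ys @ z # y # rev xs" by (metis rev_rev_ident rev.simps append.assoc rev_append append_Cons append_Nil)
  then show "adj q p R" unfolding adj_def using w by blast
next
  assume "adj q p R"
  then obtain xs y z ys where w: "R = xs @ y # z # ys" "q \<le> y" "p \<le> z" unfolding adj_def by blast
  then have "rev R = rev ys @ z # y # rev xs" by simp
  then show "adj p q (rev R)" unfolding adj_def using w by blast
qed

lemma occ3_Cons_small: assumes "x < a" shows "occ3 a b c (x # xs) \<longleftrightarrow> occ3 a b c xs"
proof
  assume "occ3 a b c (x # xs)"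
  then obtain ys e f g zs where w: "x # xs = ys @ e # f # g # zs" "a \<le> e" "b \<le> f" "c \<le> g"
    unfolding occ3_def by blast
  show "occ3 a b c xs"
  proof (cases ys)
    case Nil then show ?thesis using w assms by auto
  next
    case (Cons y ys') then have "xs = ys' @ e # f # g # zs" using w by auto
    then show ?thesis using w unfolding occ3_def by blast
  qed
next
  assume "occ3 a b c xs" then show "occ3 a b c (x # xs)" unfolding occ3_def
    by (metis append_Cons)
qed

lemma key:
  assumes x: "a \<le> x" and R: "\<forall>r\<in>set R. a \<le> r" and D: "D = [] \<or> hd D < a"
    and p: "a \<le> p" and q: "a \<le> q"
  shows "occ3 a p q (x # R @ D) \<longleftrightarrow> adj p q R \<or> occ3 a p q D"
proof
  assume "occ3 a p q (x # R @ D)"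
  then obtain xs e f g ys where w: "(x # R) @ D = xs @ e # f # g # ys" "a \<le> e" "p \<le> f" "q \<le> g"
    unfolding occ3_def by auto
  have inside: "adj p q R" if h: "x # R = xs @ e # f # g # us" for us
  proof (cases xs)
    case Nil then have "R = [] @ f # g # us" using h by auto
    then show ?thesis using w unfolding adj_def by blast
  next
    case (Cons y xs') then have "R = (xs' @ [e]) @ f # g # us" using h by auto
    then show ?thesis using w unfolding adj_def by blast
  qed
  from w(1) obtain us where
    "(x # R = xs @ us \<and> us @ D = e # f # g # ys) \<or> (x # R @ us = xs \<and> D = us @ e # f # g # ys)"
    unfolding append_eq_append_conv2 by auto
  then show "adj p q R \<or> occ3 a p q D"
  proof
    assume h: "x # R = xs @ us \<and> us @ D = e # f # g # ys"
    show ?thesis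
    proof (cases us)
      case Nil then show ?thesis using h w unfolding occ3_def by fastforce
    next
      case (Cons u1 us1) note c1 = this
      show ?thesis
      proof (cases us1)
        case Nil then show ?thesis using h w c1 D p by auto
      next
        case (Cons u2 us2) note c2 = this
        show ?thesis
        proof (cases us2)
          case Nil then show ?thesis using h w c1 c2 D q by auto
        next
          case (Cons u3 us3)
          then have "x # R = xs @ e # f # g # us3" using h c1 c2 by auto
          then show ?thesis using inside by blast
        qed
      qed
    qed
  next
    assume h: "x # R @ us = xs \<and> D = us @ e # f # g # ys"
    then have "occ3 a p q D" unfolding occ3_def using w by blast
    then show ?thesis by blast
  qed
next
  assume "adj p q R \<or> occ3 a p q D"
  then show "occ3 a p q (x # R @ D)"
  proof
    assume "adj p q R"
    then obtain xs y z ys where r: "R = xs @ y # z # ys" "p \<le> y" "q \<le> z" unfolding adj_def by blast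
    show ?thesis
    proof (cases xs rule: rev_cases)
      case Nil
      then have "x # R @ D = [] @ x # y # z # ys @ D" using r by simp
      then show ?thesis unfolding occ3_def using x r by blast
    next
      case (snoc xs' l)
      then have "x # R @ D = (x # xs') @ l # y # z # ys @ D" using r by simp
      moreover have "a \<le> l" using R r snoc by auto
      ultimately show ?thesis unfolding occ3_def using r by blast
    qed
  next
    assume "occ3 a p q D"
    then show ?thesis unfolding occ3_def by (metis append_Cons append.assoc)
  qed
qed



function phi :: "nat \<Rightarrow> nat list \<Rightarrow> nat list" where
  "phi a [] = []"
| "phi a (x # xs) = (if x < a then x # phi a xs
     else x # rev (takeWhile (\<lambda>y. a \<le> y) xs) @ phi a (dropWhile (\<lambda>y. a \<le> y) xs))"
  by pat_completeness auto
termination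
  by (relation "measure (\<lambda>(a,xs). length xs)") (auto simp: le_imp_less_Suc length_dropWhile_le)

lemma phi_length[simp]: "length (phi a w) = length w"
  by (induction a w rule: phi.induct) (auto, metis length_append takeWhile_dropWhile_id)

lemma phi_set[simp]: "set (phi a w) = set w"
proof (induction a w rule: phi.induct)
  case (2 a x xs)
  have "set xs = set (takeWhile (\<lambda>y. a \<le> y) xs) \<union> set (dropWhile (\<lambda>y. a \<le> y) xs)"
    by (metis set_append takeWhile_dropWhile_id)
  then show ?case using 2 by auto
qed simp

lemma phi_sum[simp]: "sum_list (phi a w) = sum_list w"
  by (induction a w rule: phi.induct) (auto, metis sum_list_append takeWhile_dropWhile_id)

lemma phi_hd: "phi a w = [] \<longleftrightarrow> w = []" "w \<noteq> [] \<Longrightarrow> hd (phi a w) = hd w"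
  by (cases w; simp)+

lemma small_start: "D = [] \<or> hd D < (a::nat) \<Longrightarrow> takeWhile (\<lambda>y. a \<le> y) D = [] \<and> dropWhile (\<lambda>y. a \<le> y) D = D"
  by (cases D) auto

lemma dropWhile_start: "dropWhile (\<lambda>y. a \<le> y) xs = [] \<or> hd (dropWhile (\<lambda>y. a \<le> y) xs) < (a::nat)"
  by (induction xs) auto

lemma phi_phi[simp]: "phi a (phi a w) = w"
proof (induction a w rule: phi.induct)
  case (1 a) then show ?case by simp
next
  case (2 a x xs)
  show ?case
  proof (cases "x < a")
    case True then show ?thesis using 2 by simp
  next
    case False
    define R where "R = takeWhile (\<lambda>y. a \<le> y) xs"
    define D where "D = dropWhile (\<lambda>y. a \<le> y) xs"
    have RD: "xs = R @ D" unfolding R_def D_def by simp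
    have Rge: "\<forall>r\<in>set (rev R). a \<le> r" unfolding R_def by (auto dest: set_takeWhileD)
    have "D = [] \<or> hd D < a" unfolding D_def by (rule dropWhile_start)
    then have Ds: "phi a D = [] \<or> hd (phi a D) < a" by (metis phi_hd)
    have t: "takeWhile (\<lambda>y. a \<le> y) (rev R @ phi a D) = rev R"
      using Rge small_start[OF Ds] takeWhile_append2[of "rev R" "\<lambda>y. a \<le> y" "phi a D"] by simp
    have d: "dropWhile (\<lambda>y. a \<le> y) (rev R @ phi a D) = phi a D"
      using Rge small_start[OF Ds] dropWhile_append2[of "rev R" "\<lambda>y. a \<le> y" "phi a D"] by simp
    have "phi a (phi a (x # xs)) = x # R @ phi a (phi a D)"
    proof -
      have "phi a (x # xs) = x # rev R @ phi a D" using False unfolding R_def D_def by simp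
      then show ?thesis using False t d by simp
    qed
    also have "\<dots> = x # xs"
    proof -
      have IH: "phi a (phi a D) = D" using 2(2)[OF False] unfolding D_def by simp
      show ?thesis unfolding IH using RD by simp
    qed
    finally show ?thesis .
  qed
qed

lemma phi_occ:
  "a \<le> p \<Longrightarrow> a \<le> q \<Longrightarrow> occ3 a p q w \<longleftrightarrow> occ3 a q p (phi a w)"
proof (induction a w rule: phi.induct)
  case (1 a) then show ?case by (simp add: occ3_def)
next
  case (2 a x xs)
  show ?case
  proof (cases "x < a")
    case True then show ?thesis using 2 by (simp add: occ3_Cons_small)
  next
    case False
    define R where "R = takeWhile (\<lambda>y. a \<le> y) xs"
    define D where "D = dropWhile (\<lambda>y. a \<le> y) xs"
    have RD: "xs = R @ D" unfolding R_def D_def by simp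
    have Rge: "\<forall>r\<in>set R. a \<le> r" unfolding R_def by (auto dest: set_takeWhileD)
    have Rge': "\<forall>r\<in>set (rev R). a \<le> r" using Rge by simp
    have D0: "D = [] \<or> hd D < a" unfolding D_def by (rule dropWhile_start)
    then have Ds: "phi a D = [] \<or> hd (phi a D) < a" by (metis phi_hd)
    have IH: "occ3 a p q D \<longleftrightarrow> occ3 a q p (phi a D)" using 2(2)[OF False] 2(3,4) unfolding D_def by simp
    have ph: "phi a (x # xs) = x # rev R @ phi a D" using False unfolding R_def D_def by simp
    have "occ3 a p q (x # xs) \<longleftrightarrow> adj p q R \<or> occ3 a p q D"
      unfolding RD using key[of a x R D p q] False Rge D0 2(3,4) by simp
    also have "\<dots> \<longleftrightarrow> adj q p (rev R) \<or> occ3 a q p (phi a D)" using IH adj_rev by simp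
    also have "\<dots> \<longleftrightarrow> occ3 a q p (phi a (x # xs))"
      unfolding ph using key[of a x "rev R" "phi a D" q p] False Rge' Ds 2(3,4) by simp
    finally show ?thesis .
  qed
qed



lemma wilf_by_inv:
  assumes inv: "\<And>w. f (f w) = w" and len: "\<And>w. length (f w) = length w"
    and sm: "\<And>w. sum_list (f w) = sum_list w" and pw: "\<And>w. pword w \<Longrightarrow> pword (f w)"
    and pt: "\<And>w. pword w \<Longrightarrow> pat_le u w \<longleftrightarrow> pat_le v (f w)"
  shows "wilf_equiv u v"
  unfolding wilf_equiv_def
proof (intro ext)
  fix n m
  let ?A = "{w. pword w \<and> pat_le u w \<and> length w = n \<and> sum_list w = m}"
  let ?B = "{w. pword w \<and> pat_le v w \<and> length w = n \<and> sum_list w = m}"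
  have "bij_betw f ?A ?B"
  proof (rule bij_betw_byWitness[where f'=f])
    show "\<forall>a\<in>?A. f (f a) = a" using inv by simp
    show "\<forall>a\<in>?B. f (f a) = a" using inv by simp
    show "f ` ?A \<subseteq> ?B"
    proof
      fix y assume "y \<in> f ` ?A"
      then obtain w where w: "w \<in> ?A" "y = f w" by auto
      have "pat_le v (f w)" using pt w by auto
      then show "y \<in> ?B" using w pw len sm by auto
    qed
    show "f ` ?B \<subseteq> ?A"
    proof
      fix y assume "y \<in> f ` ?B"
      then obtain w where w: "w \<in> ?B" "y = f w" by auto
      have "pat_le u (f w) \<longleftrightarrow> pat_le v (f (f w))" using pt pw w by auto
      then show "y \<in> ?A" using w pw len sm inv by auto
    qed
  qed
  then show "Fgen u n m = Fgen v n m" unfolding Fgen_def by (rule bij_betw_same_card)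
qed

lemma wilf_refl: "wilf_equiv u u" by (simp add: wilf_equiv_def)
lemma wilf_sym: "wilf_equiv u v \<Longrightarrow> wilf_equiv v u" by (simp add: wilf_equiv_def)
lemma wilf_trans: "wilf_equiv u v \<Longrightarrow> wilf_equiv v w \<Longrightarrow> wilf_equiv u w" by (simp add: wilf_equiv_def)

lemma wilf_rev: "wilf_equiv [a,b,c] [c,b,a]"
proof (rule wilf_by_inv[where f=rev])
  fix w :: "nat list"
  show "pat_le [a,b,c] w \<longleftrightarrow> pat_le [c,b,a] (rev w)"
    unfolding pat_le_occ3 by (rule occ3_rev)
qed (auto simp: pword_def)

lemma wilf_phi: assumes "a \<le> p" "a \<le> q" shows "wilf_equiv [a,p,q] [a,q,p]"
proof (rule wilf_by_inv[where f="phi a"])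
  fix w :: "nat list"
  show "pat_le [a,p,q] w \<longleftrightarrow> pat_le [a,q,p] (phi a w)"
    unfolding pat_le_occ3 using assms by (rule phi_occ)
qed (auto simp: pword_def)



definition Tset :: "nat list \<Rightarrow> nat \<Rightarrow> nat list set" where
  "Tset p m = {w. length w = length p \<and> list_all2 (\<le>) p w \<and> sum_list w = m}"

definition Nc :: "nat \<Rightarrow> nat \<Rightarrow> nat" where
  "Nc n k = card {z::nat list. length z = n \<and> sum_list z = k}"

definition G :: "nat \<Rightarrow> nat \<Rightarrow> nat \<Rightarrow> nat" where
  "G n e m = (if e \<le> m then Nc n (m - e) else 0)"

lemma Nc0: "Nc n 0 = 1"
proof -
  have "{z::nat list. length z = n \<and> sum_list z = 0} = {replicate n 0}"
    by (auto simp: sum_list_eq_0_iff intro: replicate_eqI)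
  then show ?thesis unfolding Nc_def by simp
qed

lemma G_self: "G n e e = 1" by (simp add: G_def Nc0)
lemma G_less: "m < e \<Longrightarrow> G n e m = 0" by (simp add: G_def)

lemma la2_sum: "list_all2 (\<le>) p w \<Longrightarrow> sum_list p \<le> sum_list (w::nat list)"
  by (induction rule: list_all2_induct) auto

lemma la2_sub: "list_all2 (\<le>) p w \<Longrightarrow> sum_list (map2 (-) w p) + sum_list p = sum_list (w::nat list)"
  by (induction rule: list_all2_induct) auto

lemma la2_inv1: "list_all2 (\<le>) p w \<Longrightarrow> map2 (+) (map2 (-) w p) p = (w::nat list)"
  by (induction rule: list_all2_induct) auto

lemma la2_inv2: "length z = length p \<Longrightarrow> map2 (-) (map2 (+) z p) p = (z::nat list)"
  by (induction z p rule: list_induct2) auto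

lemma la2_add: "length z = length p \<Longrightarrow> list_all2 (\<le>) p (map2 (+) z (p::nat list))"
  by (induction z p rule: list_induct2) auto

lemma sum_add: "length z = length p \<Longrightarrow> sum_list (map2 (+) z p) = sum_list z + sum_list (p::nat list)"
  by (induction z p rule: list_induct2) auto

lemma finite_Tset: "finite (Tset p m)"
proof -
  have "Tset p m \<subseteq> {w. set w \<subseteq> {0..m} \<and> length w = length p}"
    unfolding Tset_def using member_le_sum_list by fastforce
  moreover have "finite {w. set w \<subseteq> {0..m} \<and> length w = length p}"
    by (rule finite_lists_length_eq) simp
  ultimately show ?thesis by (rule finite_subset)
qed

lemma card_Tset: "card (Tset p m) = G (length p) (sum_list p) m"
proof (cases "sum_list p \<le> m")
  case True
  let ?Z = "{z::nat list. length z = length p \<and> sum_list z = m - sum_list p}"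
  have "bij_betw (\<lambda>w. map2 (-) w p) (Tset p m) ?Z"
  proof (rule bij_betw_byWitness[where f'="\<lambda>z. map2 (+) z p"])
    show "\<forall>a\<in>Tset p m. map2 (+) (map2 (-) a p) p = a" unfolding Tset_def using la2_inv1 by auto
    show "\<forall>a\<in>?Z. map2 (-) (map2 (+) a p) p = a" using la2_inv2 by auto
    show "(\<lambda>w. map2 (-) w p) ` Tset p m \<subseteq> ?Z"
    proof
      fix y assume "y \<in> (\<lambda>w. map2 (-) w p) ` Tset p m"
      then obtain w where w: "w \<in> Tset p m" "y = map2 (-) w p" by auto
      then show "y \<in> ?Z" unfolding Tset_def using la2_sub[of p w] by auto
    qed
    show "(\<lambda>z. map2 (+) z p) ` ?Z \<subseteq> Tset p m"
      unfolding Tset_def using la2_add sum_add True by auto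
  qed
  then have "card (Tset p m) = card ?Z" by (rule bij_betw_same_card)
  then show ?thesis using True by (simp add: G_def Nc_def)
next
  case False
  then have "Tset p m = {}" unfolding Tset_def using la2_sum by fastforce
  then show ?thesis using False by (simp add: G_def)
qed

lemma Tset_Int: "length p = length q \<Longrightarrow> Tset p m \<inter> Tset q m = Tset (map2 max p q) m"
  unfolding Tset_def by (auto simp: list_all2_conv_all_nth)



lemma pat_expl: "pat_le [x,y,z] w \<longleftrightarrow> (\<exists>i. i + 3 \<le> length w \<and> x \<le> w!i \<and> y \<le> w!(i+1) \<and> z \<le> w!(i+2))"
proof -
  have "(\<forall>j<3. [x,y,z] ! j \<le> w ! (i + j)) \<longleftrightarrow> x \<le> w!i \<and> y \<le> w!(i+1) \<and> z \<le> w!(i+2)" for i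
  proof
    assume "\<forall>j<3. [x,y,z] ! j \<le> w ! (i + j)"
    from this[rule_format, of 0] this[rule_format, of 1] this[rule_format, of 2]
    show "x \<le> w!i \<and> y \<le> w!(i+1) \<and> z \<le> w!(i+2)" by simp
  next
    assume "x \<le> w!i \<and> y \<le> w!(i+1) \<and> z \<le> w!(i+2)"
    then show "\<forall>j<3. [x,y,z] ! j \<le> w ! (i + j)"
      by (auto simp: less_Suc_eq numeral_3_eq_3)
  qed
  then show ?thesis unfolding pat_le_def by (simp add: numeral_3_eq_3)
qed

lemma ex3: "(\<exists>i::nat. i + 3 \<le> 3 \<and> P i) \<longleftrightarrow> P 0" by auto
lemma ex4: "(\<exists>i::nat. i + 3 \<le> 4 \<and> P i) \<longleftrightarrow> P 0 \<or> P 1"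
proof
  assume "\<exists>i::nat. i + 3 \<le> 4 \<and> P i"
  then obtain i where "i + 3 \<le> 4" "P i" by blast
  then have "i = 0 \<or> i = 1" by arith
  then show "P 0 \<or> P 1" using \<open>P i\<close> by auto
next
  assume "P 0 \<or> P 1"
  then show "\<exists>i::nat. i + 3 \<le> 4 \<and> P i"
  proof (elim disjE)
    assume "P 0" then show ?thesis by (intro exI[of _ 0]) simp
  next
    assume "P 1" then show ?thesis by (intro exI[of _ 1]) simp
  qed
qed
lemma ex5: "(\<exists>i::nat. i + 3 \<le> 5 \<and> P i) \<longleftrightarrow> P 0 \<or> P 1 \<or> P 2"
proof
  assume "\<exists>i::nat. i + 3 \<le> 5 \<and> P i"
  then obtain i where "i + 3 \<le> 5" "P i" by blast
  then have "i = 0 \<or> i = 1 \<or> i = 2" by arith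
  then show "P 0 \<or> P 1 \<or> P 2" using \<open>P i\<close> by auto
next
  assume "P 0 \<or> P 1 \<or> P 2"
  then show "\<exists>i::nat. i + 3 \<le> 5 \<and> P i"
  proof (elim disjE)
    assume "P 0" then show ?thesis by (intro exI[of _ 0]) simp
  next
    assume "P 1" then show ?thesis by (intro exI[of _ 1]) simp
  next
    assume "P 2" then show ?thesis by (intro exI[of _ 2]) simp
  qed
qed

lemma len3: "length w = 3 \<Longrightarrow> \<exists>a b c. w = [a,b,c]"
  by (cases w; cases "tl w"; cases "tl (tl w)"; auto simp: numeral_3_eq_3)
lemma len4: "length w = 4 \<Longrightarrow> \<exists>a b c d. w = [a,b,c,d]"
  by (cases w; cases "tl w"; cases "tl (tl w)"; cases "tl (tl (tl w))"; auto simp: numeral_eq_Suc)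
lemma len5: "length w = 5 \<Longrightarrow> \<exists>a b c d e. w = [a,b,c,d,e]"
  by (cases w; cases "tl w"; cases "tl (tl w)"; cases "tl (tl (tl w))"; cases "tl (tl (tl (tl w)))"; auto simp: numeral_eq_Suc)

lemma pat3: "pat_le [x,y,z] [a,b,c] \<longleftrightarrow> x \<le> a \<and> y \<le> b \<and> z \<le> c"
proof -
  have "pat_le [x,y,z] [a,b,c] \<longleftrightarrow> (\<exists>i::nat. i + 3 \<le> 3 \<and> (x \<le> [a,b,c]!i \<and> y \<le> [a,b,c]!(i+1) \<and> z \<le> [a,b,c]!(i+2)))"
    unfolding pat_expl by simp
  then show ?thesis unfolding ex3 by simp
qed

lemma pat4: "pat_le [x,y,z] [a,b,c,d] \<longleftrightarrow> (x \<le> a \<and> y \<le> b \<and> z \<le> c) \<or> (x \<le> b \<and> y \<le> c \<and> z \<le> d)"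
proof -
  have "pat_le [x,y,z] [a,b,c,d] \<longleftrightarrow> (\<exists>i::nat. i + 3 \<le> 4 \<and> (x \<le> [a,b,c,d]!i \<and> y \<le> [a,b,c,d]!(i+1) \<and> z \<le> [a,b,c,d]!(i+2)))"
    unfolding pat_expl by simp
  then show ?thesis unfolding ex4 by simp
qed

lemma pat5: "pat_le [x,y,z] [a,b,c,d,e] \<longleftrightarrow> (x \<le> a \<and> y \<le> b \<and> z \<le> c) \<or> (x \<le> b \<and> y \<le> c \<and> z \<le> d) \<or> (x \<le> c \<and> y \<le> d \<and> z \<le> e)"
proof -
  have "pat_le [x,y,z] [a,b,c,d,e] \<longleftrightarrow> (\<exists>i::nat. i + 3 \<le> 5 \<and> (x \<le> [a,b,c,d,e]!i \<and> y \<le> [a,b,c,d,e]!(i+1) \<and> z \<le> [a,b,c,d,e]!(i+2)))"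
    unfolding pat_expl by simp
  then show ?thesis unfolding ex5 by simp
qed

definition S where "S u n m = {w. pword w \<and> pat_le u w \<and> length w = n \<and> sum_list w = m}"

lemma S3: assumes "1 \<le> x" "1 \<le> y" "1 \<le> z"
  shows "S [x,y,z] 3 m = Tset [x,y,z] m"
proof (rule set_eqI)
  fix w show "w \<in> S [x,y,z] 3 m \<longleftrightarrow> w \<in> Tset [x,y,z] m"
  proof (cases "length w = 3")
    case True
    then obtain a b c where "w = [a,b,c]" using len3 by blast
    then show ?thesis using assms by (auto simp: S_def Tset_def pword_def pat3)
  next
    case False then show ?thesis by (auto simp: S_def Tset_def)
  qed
qed

lemma S4: assumes "1 \<le> x" "1 \<le> y" "1 \<le> z"
  shows "S [x,y,z] 4 m = Tset [x,y,z,1] m \<union> Tset [1,x,y,z] m"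
proof (rule set_eqI)
  fix w show "w \<in> S [x,y,z] 4 m \<longleftrightarrow> w \<in> Tset [x,y,z,1] m \<union> Tset [1,x,y,z] m"
  proof (cases "length w = 4")
    case True
    then obtain a b c d where "w = [a,b,c,d]" using len4 by blast
    then show ?thesis using assms by (auto simp: S_def Tset_def pword_def pat4)
  next
    case False then show ?thesis by (auto simp: S_def Tset_def)
  qed
qed

lemma S5: assumes "1 \<le> x" "1 \<le> y" "1 \<le> z"
  shows "S [x,y,z] 5 m = Tset [x,y,z,1,1] m \<union> Tset [1,x,y,z,1] m \<union> Tset [1,1,x,y,z] m"
proof (rule set_eqI)
  fix w show "w \<in> S [x,y,z] 5 m \<longleftrightarrow> w \<in> Tset [x,y,z,1,1] m \<union> Tset [1,x,y,z,1] m \<union> Tset [1,1,x,y,z] m"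
  proof (cases "length w = 5")
    case True
    then obtain a b c d e where "w = [a,b,c,d,e]" using len5 by blast
    then show ?thesis using assms by (auto simp: S_def Tset_def pword_def pat5)
  next
    case False then show ?thesis by (auto simp: S_def Tset_def)
  qed
qed



definition e4 :: "nat \<Rightarrow> nat \<Rightarrow> nat \<Rightarrow> nat" where "e4 x y z = x + max x y + max y z + z"
definition eAC :: "nat \<Rightarrow> nat \<Rightarrow> nat \<Rightarrow> nat" where "eAC x y z = x + y + max z x + y + z"
definition eABC :: "nat \<Rightarrow> nat \<Rightarrow> nat \<Rightarrow> nat" where
  "eABC x y z = x + max x y + max (max y z) x + max y z + z"

lemma len_l3: "length [a,b,c::nat] = 3" by simp
lemma len_l4: "length [a,b,c,d::nat] = 4" by simp
lemma len_l5: "length [a,b,c,d,e::nat] = 5" by simp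

lemma Fgen_S: "Fgen u n m = card (S u n m)" by (simp add: Fgen_def S_def)

lemma F3: assumes "1 \<le> x" "1 \<le> y" "1 \<le> z"
  shows "Fgen [x,y,z] 3 m = G 3 (x+y+z) m"
  unfolding Fgen_S S3[OF assms] card_Tset len_l3 by (simp add: add.assoc)

lemma F4: assumes "1 \<le> x" "1 \<le> y" "1 \<le> z"
  shows "Fgen [x,y,z] 4 m + G 4 (e4 x y z) m = 2 * G 4 (x+y+z+1) m"
proof -
  let ?A = "Tset [x,y,z,1] m" and ?B = "Tset [1,x,y,z] m"
  have "card (?A \<union> ?B) + card (?A \<inter> ?B) = card ?A + card ?B"
    using card_Un_Int[OF finite_Tset finite_Tset] by simp
  moreover have "?A \<inter> ?B = Tset [x, max x y, max y z, z] m"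
  proof -
    have "map2 max [x,y,z,1] [1,x,y,z] = [x, max x y, max y z, z]" using assms by (auto simp: max_def)
    then show ?thesis by (simp add: Tset_Int)
  qed
  moreover have "card (Tset [x, max x y, max y z, z] m) = G 4 (e4 x y z) m"
    unfolding card_Tset len_l4 by (simp add: e4_def add.assoc)
  moreover have "card ?A = G 4 (x+y+z+1) m" "card ?B = G 4 (x+y+z+1) m"
    unfolding card_Tset len_l4 len_l5 by (simp_all add: add.assoc add.commute add.left_commute)
  ultimately show ?thesis using assms by (simp add: Fgen_S S4)
qed

lemma F5: assumes "1 \<le> x" "1 \<le> y" "1 \<le> z"
  shows "Fgen [x,y,z] 5 m + 2 * G 5 (e4 x y z + 1) m + G 5 (eAC x y z) m
         = 3 * G 5 (x+y+z+2) m + G 5 (eABC x y z) m"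
proof -
  let ?A = "Tset [x,y,z,1,1] m" and ?B = "Tset [1,x,y,z,1] m" and ?C = "Tset [1,1,x,y,z] m"
  have fin: "finite (Tset p m)" for p by (rule finite_Tset)
  have AB: "?A \<inter> ?B = Tset [x, max x y, max y z, z, 1] m"
  proof -
    have "map2 max [x,y,z,1,1] [1,x,y,z,1] = [x, max x y, max y z, z, 1]" using assms by (auto simp: max_def)
    then show ?thesis by (simp add: Tset_Int)
  qed
  have BC: "?B \<inter> ?C = Tset [1, x, max x y, max y z, z] m"
  proof -
    have "map2 max [1,x,y,z,1] [1,1,x,y,z] = [1, x, max x y, max y z, z]" using assms by (auto simp: max_def)
    then show ?thesis by (simp add: Tset_Int)
  qed
  have AC: "?A \<inter> ?C = Tset [x, y, max z x, y, z] m"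
  proof -
    have "map2 max [x,y,z,1,1] [1,1,x,y,z] = [x, y, max z x, y, z]" using assms by (auto simp: max_def)
    then show ?thesis by (simp add: Tset_Int)
  qed
  have ABC: "?A \<inter> ?C \<inter> (?B \<inter> ?C) = Tset [x, max x y, max (max y z) x, max y z, z] m"
  proof -
    have "?A \<inter> ?C \<inter> (?B \<inter> ?C) = (?A \<inter> ?B) \<inter> ?C" by blast
    also have "\<dots> = Tset (map2 max [x, max x y, max y z, z, 1] [1,1,x,y,z]) m" unfolding AB by (simp add: Tset_Int)
    also have "map2 max [x, max x y, max y z, z, 1] [1,1,x,y,z] = [x, max x y, max (max y z) x, max y z, z]"
      using assms by (auto simp: max_def)
    finally show ?thesis .
  qed
  have c1: "card (?A \<union> ?B) + card (?A \<inter> ?B) = card ?A + card ?B"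
    using card_Un_Int fin by (metis finite_Int finite_Un)
  have c2: "card (?A \<union> ?B \<union> ?C) + card ((?A \<union> ?B) \<inter> ?C) = card (?A \<union> ?B) + card ?C"
    using card_Un_Int fin by (metis finite_Int finite_Un)
  have c3: "card (?A \<inter> ?C \<union> ?B \<inter> ?C) + card (?A \<inter> ?C \<inter> (?B \<inter> ?C)) = card (?A \<inter> ?C) + card (?B \<inter> ?C)"
    using card_Un_Int fin by (metis finite_Int finite_Un)
  have d: "(?A \<union> ?B) \<inter> ?C = ?A \<inter> ?C \<union> ?B \<inter> ?C" by blast
  have gA: "card ?A = G 5 (x+y+z+2) m" "card ?B = G 5 (x+y+z+2) m" "card ?C = G 5 (x+y+z+2) m"
    unfolding card_Tset len_l4 len_l5 by (simp_all add: add.assoc add.commute add.left_commute)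
  have gAB: "card (?A \<inter> ?B) = G 5 (e4 x y z + 1) m" "card (?B \<inter> ?C) = G 5 (e4 x y z + 1) m"
    unfolding AB BC card_Tset len_l5 by (simp_all add: e4_def add.assoc add.commute add.left_commute)
  have gAC: "card (?A \<inter> ?C) = G 5 (eAC x y z) m"
    unfolding AC card_Tset len_l5 by (simp add: eAC_def add.assoc)
  have gABC: "card (?A \<inter> ?C \<inter> (?B \<inter> ?C)) = G 5 (eABC x y z) m"
    unfolding ABC card_Tset len_l5 by (simp add: eABC_def add.assoc)
  have F: "Fgen [x,y,z] 5 m = card (?A \<union> ?B \<union> ?C)" using assms by (simp add: Fgen_S S5)
  show ?thesis using c1 c2 c3 d gA gAB gAC gABC F by simp
qed



lemma msum_min: "(\<forall>e\<in>#P. e0 \<le> e) \<Longrightarrow> (\<Sum>e\<in>#P. G n e e0) = count P e0"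
proof (induction P)
  case empty then show ?case by simp
next
  case (add e P)
  have "G n e e0 = (if e = e0 then 1 else 0)"
    using add.prems by (auto simp: G_self G_less)
  then show ?case using add by auto
qed

lemma G_indep: "(\<And>m. (\<Sum>e\<in>#P. G n e m) = (\<Sum>e\<in>#Q. G n e m)) \<Longrightarrow> P = Q"
proof (induction "size P + size Q" arbitrary: P Q rule: less_induct)
  case less
  show ?case
  proof (cases "P = {#} \<and> Q = {#}")
    case True then show ?thesis by simp
  next
    case False
    define e0 where "e0 = Min (set_mset P \<union> set_mset Q)"
    have fin: "finite (set_mset P \<union> set_mset Q)" by simp
    have ne: "set_mset P \<union> set_mset Q \<noteq> {}" using False by auto
    have e0in: "e0 \<in> set_mset P \<union> set_mset Q" unfolding e0_def using fin ne by (rule Min_in)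
    have lowP: "\<forall>e\<in>#P. e0 \<le> e" unfolding e0_def using fin by auto
    have lowQ: "\<forall>e\<in>#Q. e0 \<le> e" unfolding e0_def using fin by auto
    have cnt: "count P e0 = count Q e0"
      using less.prems[of e0] msum_min[OF lowP, of n] msum_min[OF lowQ, of n] by simp
    then have inP: "e0 \<in># P" and inQ: "e0 \<in># Q" using e0in by (metis Un_iff count_greater_zero_iff)+
    define P' where "P' = P - {#e0#}"
    define Q' where "Q' = Q - {#e0#}"
    have PP: "P = add_mset e0 P'" unfolding P'_def using inP by simp
    have QQ: "Q = add_mset e0 Q'" unfolding Q'_def using inQ by simp
    have "(\<Sum>e\<in>#P'. G n e m) = (\<Sum>e\<in>#Q'. G n e m)" for m
      using less.prems[of m] unfolding PP QQ by simp
    moreover have "size P' + size Q' < size P + size Q" unfolding PP QQ by simp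
    ultimately have "P' = Q'" using less.hyps by blast
    then show ?thesis using PP QQ by simp
  qed
qed

lemma G_indep1: "(\<And>m. G n a m = G n b m) \<Longrightarrow> a = b"
  using G_indep[where P="{#a#}" and n=n and Q="{#b#}"] by simp

lemma G_indep2: "(\<And>m. G n a m + G n b m = G n c m + G n d m) \<Longrightarrow> (a = c \<and> b = d) \<or> (a = d \<and> b = c)"
  using G_indep[where P="{#a,b#}" and n=n and Q="{#c,d#}"] by (auto simp: add_eq_conv_diff split: if_splits)



definition INV :: "nat \<Rightarrow> nat \<Rightarrow> nat \<Rightarrow> nat \<Rightarrow> nat \<Rightarrow> nat \<Rightarrow> bool" where
  "INV x y z x' y' z' \<longleftrightarrow> x+y+z = x'+y'+z' \<and> e4 x y z = e4 x' y' z' \<and>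
     ((eAC x y z = eAC x' y' z' \<and> eABC x y z = eABC x' y' z') \<or> (eAC x y z = eABC x y z \<and> eAC x' y' z' = eABC x' y' z'))"

lemma fam1: "INV a a a x y z \<Longrightarrow> x=a \<and> y=a \<and> z=a"
  unfolding INV_def e4_def eAC_def eABC_def max_def by (auto split: if_splits)

lemma fam2: "a < b \<Longrightarrow> INV a a b x y z \<Longrightarrow> (x=a \<and> y=a \<and> z=b) \<or> (x=a \<and> y=b \<and> z=a) \<or> (x=b \<and> y=a \<and> z=a)"
  unfolding INV_def e4_def eAC_def eABC_def max_def by (auto split: if_splits)

lemma fam3: "b < a \<Longrightarrow> INV a a b x y z \<Longrightarrow> (x=a \<and> y=a \<and> z=b) \<or> (x=b \<and> y=a \<and> z=a)"
  unfolding INV_def e4_def eAC_def eABC_def max_def by (auto split: if_splits)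

lemma fam4: "b < a \<Longrightarrow> INV a b a x y z \<Longrightarrow> (x=a \<and> y=b \<and> z=a)"
  unfolding INV_def e4_def eAC_def eABC_def max_def by (auto split: if_splits)

lemma fam5: "a < b \<Longrightarrow> b < c \<Longrightarrow> INV b a c x y z \<Longrightarrow> (x=b \<and> y=a \<and> z=c) \<or> (x=c \<and> y=a \<and> z=b)"
  unfolding INV_def e4_def eAC_def eABC_def max_def by (auto split: if_splits)

lemma fam6: "a < b \<Longrightarrow> b < c \<Longrightarrow> INV a b c x y z \<Longrightarrow> (x=a \<and> y=b \<and> z=c) \<or> (x=a \<and> y=c \<and> z=b) \<or> (x=c \<and> y=b \<and> z=a) \<or> (x=b \<and> y=c \<and> z=a)"
  unfolding INV_def e4_def eAC_def eABC_def max_def by (auto split: if_splits)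

lemma wilf_INV:
  assumes u: "1 \<le> x" "1 \<le> y" "1 \<le> z" and v: "1 \<le> x'" "1 \<le> y'" "1 \<le> z'"
    and w: "wilf_equiv [x,y,z] [x',y',z']"
  shows "INV x y z x' y' z'"
proof -
  have FF: "Fgen [x,y,z] n m = Fgen [x',y',z'] n m" for n m using w by (simp add: wilf_equiv_def)
  have s: "x+y+z = x'+y'+z'"
    by (rule G_indep1[where n=3]) (metis FF F3[OF u] F3[OF v])
  have e: "e4 x y z = e4 x' y' z'"
  proof (rule G_indep1[where n=4])
    fix m
    show "G 4 (e4 x y z) m = G 4 (e4 x' y' z') m"
      using F4[OF u, of m] F4[OF v, of m] FF[of 4 m] s by simp
  qed
  have "(eAC x y z = eAC x' y' z' \<and> eABC x' y' z' = eABC x y z) \<or> (eAC x y z = eABC x y z \<and> eABC x' y' z' = eAC x' y' z')"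
  proof (rule G_indep2[where n=5])
    fix m
    show "G 5 (eAC x y z) m + G 5 (eABC x' y' z') m = G 5 (eAC x' y' z') m + G 5 (eABC x y z) m"
      using F5[OF u, of m] F5[OF v, of m] FF[of 5 m] s e by simp
  qed
  then show ?thesis unfolding INV_def using s e by auto
qed

lemma P3_form: "v \<in> P3 \<Longrightarrow> \<exists>x y z. v = [x,y,z] \<and> 1 \<le> x \<and> 1 \<le> y \<and> 1 \<le> z"
  unfolding P3_def pword_def by (auto dest!: len3)

lemma P3_mem: "1 \<le> x \<Longrightarrow> 1 \<le> y \<Longrightarrow> 1 \<le> z \<Longrightarrow> [x,y,z] \<in> P3"
  unfolding P3_def pword_def by auto



definition good :: "nat list set \<Rightarrow> bool" where
  "good C \<longleftrightarrow> C \<noteq> {} \<and> C \<subseteq> P3 \<and> (\<forall>u\<in>C. {v \<in> P3. wilf_equiv u v} = C)"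

lemma good_intro:
  assumes r: "r \<in> C" and sub: "C \<subseteq> P3" and eq: "\<forall>u\<in>C. wilf_equiv r u"
    and cl: "\<And>v. v \<in> P3 \<Longrightarrow> wilf_equiv r v \<Longrightarrow> v \<in> C"
  shows "good C"
  unfolding good_def
proof (intro conjI ballI)
  show "C \<noteq> {}" using r by auto
  show "C \<subseteq> P3" by (rule sub)
  fix u assume u: "u \<in> C"
  have "wilf_equiv u v \<longleftrightarrow> wilf_equiv r v" for v
    using eq u wilf_sym wilf_trans by metis
  then show "{v \<in> P3. wilf_equiv u v} = C" using cl sub eq by auto
qed

lemma closure_by:
  assumes r: "1 \<le> a" "1 \<le> b" "1 \<le> c"
    and f: "\<And>x y z. INV a b c x y z \<Longrightarrow> [x,y,z] \<in> C"
  shows "\<And>v. v \<in> P3 \<Longrightarrow> wilf_equiv [a,b,c] v \<Longrightarrow> v \<in> C"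
proof -
  fix v assume "v \<in> P3" "wilf_equiv [a,b,c] v"
  then obtain x y z where v: "v = [x,y,z]" "1 \<le> x" "1 \<le> y" "1 \<le> z" and w: "wilf_equiv [a,b,c] [x,y,z]"
    using P3_form by blast
  show "v \<in> C" using f[OF wilf_INV[OF r v(2-4) w]] v(1) by simp
qed

lemma good1: assumes "1 \<le> a" shows "good {[a,a,a]}"
proof (rule good_intro[where r="[a,a,a]"])
  show "{[a,a,a]} \<subseteq> P3" using assms by (auto simp: P3_mem)
  show "\<forall>u\<in>{[a,a,a]}. wilf_equiv [a,a,a] u" using wilf_refl by auto
  show "\<And>v. v \<in> P3 \<Longrightarrow> wilf_equiv [a,a,a] v \<Longrightarrow> v \<in> {[a,a,a]}"
    by (rule closure_by) (use assms in \<open>auto dest: fam1\<close>)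
qed simp

lemma good2: assumes "1 \<le> a" "a < b" shows "good {[a,a,b],[a,b,a],[b,a,a]}"
proof (rule good_intro[where r="[a,a,b]"])
  show "{[a,a,b],[a,b,a],[b,a,a]} \<subseteq> P3" using assms by (auto simp: P3_mem)
  show "\<forall>u\<in>{[a,a,b],[a,b,a],[b,a,a]}. wilf_equiv [a,a,b] u"
    using wilf_refl wilf_rev[of a a b] wilf_phi[of a a b] assms by auto
  show "\<And>v. v \<in> P3 \<Longrightarrow> wilf_equiv [a,a,b] v \<Longrightarrow> v \<in> {[a,a,b],[a,b,a],[b,a,a]}"
    by (rule closure_by) (use assms in \<open>auto dest: fam2\<close>)
qed simp

lemma good3: assumes "1 \<le> b" "b < a" shows "good {[a,a,b],[b,a,a]}"
proof (rule good_intro[where r="[a,a,b]"])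
  show "{[a,a,b],[b,a,a]} \<subseteq> P3" using assms by (auto simp: P3_mem)
  show "\<forall>u\<in>{[a,a,b],[b,a,a]}. wilf_equiv [a,a,b] u"
    using wilf_refl wilf_rev[of a a b] by auto
  show "\<And>v. v \<in> P3 \<Longrightarrow> wilf_equiv [a,a,b] v \<Longrightarrow> v \<in> {[a,a,b],[b,a,a]}"
    by (rule closure_by) (use assms in \<open>auto dest: fam3\<close>)
qed simp

lemma good4: assumes "1 \<le> b" "b < a" shows "good {[a,b,a]}"
proof (rule good_intro[where r="[a,b,a]"])
  show "{[a,b,a]} \<subseteq> P3" using assms by (auto simp: P3_mem)
  show "\<forall>u\<in>{[a,b,a]}. wilf_equiv [a,b,a] u" using wilf_refl by auto
  show "\<And>v. v \<in> P3 \<Longrightarrow> wilf_equiv [a,b,a] v \<Longrightarrow> v \<in> {[a,b,a]}"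
    by (rule closure_by) (use assms in \<open>auto dest: fam4\<close>)
qed simp

lemma good5: assumes "1 \<le> a" "a < b" "b < c" shows "good {[b,a,c],[c,a,b]}"
proof (rule good_intro[where r="[b,a,c]"])
  show "{[b,a,c],[c,a,b]} \<subseteq> P3" using assms by (auto simp: P3_mem)
  show "\<forall>u\<in>{[b,a,c],[c,a,b]}. wilf_equiv [b,a,c] u"
    using wilf_refl wilf_rev[of b a c] by auto
  show "\<And>v. v \<in> P3 \<Longrightarrow> wilf_equiv [b,a,c] v \<Longrightarrow> v \<in> {[b,a,c],[c,a,b]}"
    by (rule closure_by) (use assms in \<open>auto dest: fam5\<close>)
qed simp

lemma good6: assumes "1 \<le> a" "a < b" "b < c" shows "good {[a,b,c],[a,c,b],[c,b,a],[b,c,a]}"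
proof (rule good_intro[where r="[a,b,c]"])
  show "{[a,b,c],[a,c,b],[c,b,a],[b,c,a]} \<subseteq> P3" using assms by (auto simp: P3_mem)
  have 1: "wilf_equiv [a,b,c] [a,c,b]" using wilf_phi[of a b c] assms by simp
  have 2: "wilf_equiv [a,b,c] [c,b,a]" by (rule wilf_rev)
  have 3: "wilf_equiv [a,b,c] [b,c,a]" using wilf_trans[OF 1 wilf_rev[of a c b]] .
  show "\<forall>u\<in>{[a,b,c],[a,c,b],[c,b,a],[b,c,a]}. wilf_equiv [a,b,c] u"
    using wilf_refl 1 2 3 by auto
  show "\<And>v. v \<in> P3 \<Longrightarrow> wilf_equiv [a,b,c] v \<Longrightarrow> v \<in> {[a,b,c],[a,c,b],[c,b,a],[b,c,a]}"
    by (rule closure_by) (use assms in \<open>auto dest: fam6\<close>)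
qed simp

lemma all_good: assumes "C \<in> listed_classes" shows "good C"
  using assms unfolding listed_classes_def
proof (elim UnE)
  assume "C \<in> {{[a,a,a]} | a. 1 \<le> a}"
  then obtain a where "C = {[a,a,a]}" "1 \<le> a" by blast
  then show ?thesis using good1 by simp
next
  assume "C \<in> {{[a,a,b],[a,b,a],[b,a,a]} | a b. 1 \<le> a \<and> a < b}"
  then obtain a b where "C = {[a,a,b],[a,b,a],[b,a,a]}" "1 \<le> a" "a < b" by blast
  then show ?thesis using good2 by simp
next
  assume "C \<in> {{[a,a,b],[b,a,a]} | a b. 1 \<le> b \<and> b < a}"
  then obtain a b where "C = {[a,a,b],[b,a,a]}" "1 \<le> b" "b < a" by blast
  then show ?thesis using good3 by simp
next
  assume "C \<in> {{[a,b,a]} | a b. 1 \<le> b \<and> b < a}"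
  then obtain a b where "C = {[a,b,a]}" "1 \<le> b" "b < a" by blast
  then show ?thesis using good4 by simp
next
  assume "C \<in> {{[b,a,c],[c,a,b]} | a b c. 1 \<le> a \<and> a < b \<and> b < c}"
  then obtain a b c where "C = {[b,a,c],[c,a,b]}" "1 \<le> a" "a < b" "b < c" by blast
  then show ?thesis using good5 by simp
next
  assume "C \<in> {{[a,b,c],[a,c,b],[c,b,a],[b,c,a]} | a b c. 1 \<le> a \<and> a < b \<and> b < c}"
  then obtain a b c where "C = {[a,b,c],[a,c,b],[c,b,a],[b,c,a]}" "1 \<le> a" "a < b" "b < c" by blast
  then show ?thesis using good6 by simp
qed

lemma cover: assumes "u \<in> P3" shows "\<exists>C\<in>listed_classes. u \<in> C"
proof -
  obtain x y z where u: "u = [x,y,z]" "1 \<le> x" "1 \<le> y" "1 \<le> z" using P3_form assms by blast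
  have m1: "1 \<le> a \<Longrightarrow> {[a,a,a]} \<in> listed_classes" for a unfolding listed_classes_def by (intro UnI1) blast
  have m2: "1 \<le> a \<Longrightarrow> a < b \<Longrightarrow> {[a,a,b],[a,b,a],[b,a,a]} \<in> listed_classes" for a b unfolding listed_classes_def by (rule UnI1, rule UnI1, rule UnI1, rule UnI1, rule UnI2) blast
  have m3: "1 \<le> b \<Longrightarrow> b < a \<Longrightarrow> {[a,a,b],[b,a,a]} \<in> listed_classes" for a b unfolding listed_classes_def by (rule UnI1, rule UnI1, rule UnI1, rule UnI2) blast
  have m4: "1 \<le> b \<Longrightarrow> b < a \<Longrightarrow> {[a,b,a]} \<in> listed_classes" for a b unfolding listed_classes_def by (rule UnI1, rule UnI1, rule UnI2) blast
  have m5: "1 \<le> a \<Longrightarrow> a < b \<Longrightarrow> b < c \<Longrightarrow> {[b,a,c],[c,a,b]} \<in> listed_classes" for a b c unfolding listed_classes_def by (rule UnI1, rule UnI2) blast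
  have m6: "1 \<le> a \<Longrightarrow> a < b \<Longrightarrow> b < c \<Longrightarrow> {[a,b,c],[a,c,b],[c,b,a],[b,c,a]} \<in> listed_classes" for a b c unfolding listed_classes_def by ( rule UnI2) blast
  consider "x = y" "y = z" | "x = y" "y < z" | "x = z" "x < y" | "y = z" "y < x"
    | "x = y" "z < y" | "y = z" "x < y" | "x = z" "y < x"
    | "x < y" "y < z" | "x < z" "z < y" | "z < y" "y < x" | "y < z" "z < x" | "y < x" "x < z" | "z < x" "x < y"
    by (cases x y rule: linorder_cases; cases y z rule: linorder_cases; cases x z rule: linorder_cases) auto
  then show ?thesis
  proof cases
    case 1 note c = this
    show ?thesis by (rule bexI[OF _ m1[where a=x]]) (use u c in simp_all)
  next case 2 note c = this
    show ?thesis by (rule bexI[OF _ m2[where a=x and b=z]]) (use u c in simp_all)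
  next case 3 note c = this
    show ?thesis by (rule bexI[OF _ m2[where a=x and b=y]]) (use u c in simp_all)
  next case 4 note c = this
    show ?thesis by (rule bexI[OF _ m2[where a=y and b=x]]) (use u c in simp_all)
  next case 5 note c = this
    show ?thesis by (rule bexI[OF _ m3[where a=x and b=z]]) (use u c in simp_all)
  next case 6 note c = this
    show ?thesis by (rule bexI[OF _ m3[where a=y and b=x]]) (use u c in simp_all)
  next case 7 note c = this
    show ?thesis by (rule bexI[OF _ m4[where a=x and b=y]]) (use u c in simp_all)
  next case 8 note c = this
    show ?thesis by (rule bexI[OF _ m6[where a=x and b=y and c=z]]) (use u c in simp_all)
  next case 9 note c = this
    show ?thesis by (rule bexI[OF _ m6[where a=x and b=z and c=y]]) (use u c in simp_all)
  next case 10 note c = this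
    show ?thesis by (rule bexI[OF _ m6[where a=z and b=y and c=x]]) (use u c in simp_all)
  next case 11 note c = this
    show ?thesis by (rule bexI[OF _ m5[where a=y and b=z and c=x]]) (use u c in simp_all)
  next case 12 note c = this
    show ?thesis by (rule bexI[OF _ m5[where a=y and b=x and c=z]]) (use u c in simp_all)
  next case 13 note c = this
    show ?thesis by (rule bexI[OF _ m6[where a=z and b=x and c=y]]) (use u c in simp_all)
  qed
qed

theorem theorem7:
  shows "{{v \<in> P3. wilf_equiv u v} | u. u \<in> P3} = listed_classes"
proof (rule set_eqI, rule iffI)
  fix C assume "C \<in> {{v \<in> P3. wilf_equiv u v} | u. u \<in> P3}"
  then obtain u where u: "u \<in> P3" "C = {v \<in> P3. wilf_equiv u v}" by blast
  obtain D where D: "D \<in> listed_classes" "u \<in> D" using cover[OF u(1)] by blast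
  have "C = D" using all_good[OF D(1)] D(2) u(2) unfolding good_def by blast
  then show "C \<in> listed_classes" using D by simp
next
  fix C assume C: "C \<in> listed_classes"
  then have g: "good C" by (rule all_good)
  then obtain u where "u \<in> C" unfolding good_def by blast
  then have "u \<in> P3" "C = {v \<in> P3. wilf_equiv u v}" using g unfolding good_def by auto
  then show "C \<in> {{v \<in> P3. wilf_equiv u v} | u. u \<in> P3}" by blast
qed

end
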